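(* Let $M>0$ and let $b:[0,1]\to\mathbb R$ satisfy $|b(a)|\le M$ for all $a$ and $b(0)=1$. Then there exist $f\in C^{1/2}_c[\frac14,\frac12]$ and $u_0\in(0,\frac{1}{80M})$ such that $L_af(u_0)$ does not converge to $L_0f(u_0)$ as $a\to0^+$.
   Context: For $a>0$ and $f\in L^1(\mathbb R)$, $L_af(u)=\frac{1}{\sqrt{2\pi}}\frac{e^{i\pi/4}}{\sqrt{2a}}\int_{\mathbb R}f(t)e^{-i\frac{(b(a)u-t)^2}{4a}}dt$, and $L_0f(u)=f(b(0)u)=f(u)$. $C^{1/2}_c[\frac14,\frac12]$ denotes complex-valued functions supported in $[\frac14,\frac12]$ that are Hölder continuous of exponent $\frac12$, i.e. $|f(t_1)-f(t_2)|\le C|t_1-t_2|^{1/2}$ for all $t_1,t_2$. *)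

theory Defs
  imports "HOL-Analysis.Analysis"
begin

definition Lop :: "(real \<Rightarrow> real) \<Rightarrow> real \<Rightarrow> (real \<Rightarrow> complex) \<Rightarrow> real \<Rightarrow> complex" where
  "Lop b a f u =
     (if a = 0 then f (b 0 * u)
      else complex_of_real (1 / sqrt (2 * pi)) * exp (\<i> * complex_of_real (pi / 4))
           / complex_of_real (sqrt (2 * a))
           * integral UNIV (\<lambda>t. f t * exp (- \<i> * complex_of_real ((b a * u - t)^2 / (4 * a)))))"

definition holder_half_supp :: "(real \<Rightarrow> complex) \<Rightarrow> bool" where
  "holder_half_supp f \<longleftrightarrow>
     (\<forall>t. t \<notin> {1/4..1/2} \<longrightarrow> f t = 0) \<and>
     (\<exists>C. \<forall>t1 t2. norm (f t1 - f t2) \<le> C * sqrt \<bar>t1 - t2\<bar>)"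

end

theory Submission
  imports Defs
begin


definition phi :: "real \<Rightarrow> real" where
  "phi t = (if t \<in> {1/4..1/2} then (t - 1/4) * (1/2 - t) else 0)"

lemma phi_nonneg: "0 \<le> phi t"
  unfolding phi_def by auto

lemma phi_le: "phi t \<le> 1/64"
proof -
  have "(t - 1/4) * (1/2 - t) \<le> 1/64"
    using sum_squares_ge_zero[of "t - 3/8" 0] by (simp add: algebra_simps power2_eq_square) 
  then show ?thesis unfolding phi_def by auto
qed

lemma phi_out: "t \<notin> {1/4..1/2} \<Longrightarrow> phi t = 0"
  unfolding phi_def by auto

lemma exp_diff: "norm (exp (\<i> * of_real a) - exp (\<i> * of_real b)) \<le> 2 * \<bar>a - b\<bar>"
proof -
  have e: "exp (\<i> * of_real a) - exp (\<i> * of_real b) = Complex (cos a - cos b) (sin a - sin b)"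
    by (simp add: cis_conv_exp[symmetric] complex_eq_iff)
  have c: "\<bar>cos a - cos b\<bar> \<le> \<bar>a - b\<bar>"
  proof -
    have "\<bar>cos a - cos b\<bar> = 2 * \<bar>sin ((a + b) / 2)\<bar> * \<bar>sin ((b - a) / 2)\<bar>"
      by (simp add: cos_diff_cos abs_mult)
    also have "\<dots> \<le> 2 * 1 * \<bar>(b - a) / 2\<bar>"
      by (intro mult_mono abs_sin_x_le_abs_x) auto
    finally show ?thesis by simp
  qed
  have s: "\<bar>sin a - sin b\<bar> \<le> \<bar>a - b\<bar>"
  proof -
    have "\<bar>sin a - sin b\<bar> = 2 * \<bar>sin ((a - b) / 2)\<bar> * \<bar>cos ((a + b) / 2)\<bar>"
      by (simp add: sin_diff_sin abs_mult)
    also have "\<dots> \<le> 2 * \<bar>(a - b) / 2\<bar> * 1"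
      by (intro mult_mono abs_sin_x_le_abs_x) auto
    finally show ?thesis by simp
  qed
  have "norm (Complex (cos a - cos b) (sin a - sin b)) \<le> \<bar>cos a - cos b\<bar> + \<bar>sin a - sin b\<bar>"
    using cmod_le[of "Complex (cos a - cos b) (sin a - sin b)"] by simp
  then show ?thesis using e c s by simp
qed

definition ss :: "nat \<Rightarrow> real" where "ss m = (1/100)^(m+2)"

lemma ss_pos: "0 < ss m" unfolding ss_def by simp
lemma ss_le: "ss m \<le> 1/10000"
proof -
  have "(1/100::real)^(m+2) \<le> (1/100)^2" by (rule power_decreasing) auto
  then show ?thesis unfolding ss_def by (simp add: power2_eq_square)
qed

definition hh :: "real \<Rightarrow> nat \<Rightarrow> real \<Rightarrow> complex" where
  "hh x m t = complex_of_real (ss m * phi t) * exp (\<i> * complex_of_real ((t - x)^2 / (4 * (ss m)^2)))"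

lemma hh_norm: "norm (hh x m t) = ss m * phi t"
  unfolding hh_def using ss_pos[of m] phi_nonneg[of t] by (simp add: norm_mult)

lemma hh_norm_le: "norm (hh x m t) \<le> ss m / 64"
  using hh_norm[of x m t] phi_le[of t] ss_pos[of m] by (simp add: mult_left_mono)

lemma hh_out: "t \<notin> {1/4..1/2} \<Longrightarrow> hh x m t = 0"
  unfolding hh_def phi_out by (simp add: phi_out)

lemma hh_lip_in:
  assumes x: "\<bar>x\<bar> \<le> 1/160" and t1: "t1 \<in> {1/4..1/2}" and t2: "t2 \<in> {1/4..1/2}"
  shows "norm (hh x m t1 - hh x m t2) \<le> \<bar>t1 - t2\<bar> / ss m"
proof -
  define s where "s = ss m"
  have s0: "0 < s" and s1: "s \<le> 1/10000" using ss_pos ss_le s_def by auto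
  define e1 where "e1 = exp (\<i> * complex_of_real ((t1 - x)^2 / (4 * s^2)))"
  define e2 where "e2 = exp (\<i> * complex_of_real ((t2 - x)^2 / (4 * s^2)))"
  have p1: "phi t1 = (t1 - 1/4) * (1/2 - t1)" and p2: "phi t2 = (t2 - 1/4) * (1/2 - t2)"
    using t1 t2 unfolding phi_def by auto
  have eq: "hh x m t1 - hh x m t2 = complex_of_real (s * (phi t1 - phi t2)) * e1
      + complex_of_real (s * phi t2) * (e1 - e2)"
    unfolding hh_def e1_def e2_def s_def by (simp add: algebra_simps)
  have "norm (hh x m t1 - hh x m t2) \<le> s * \<bar>phi t1 - phi t2\<bar> + s * phi t2 * norm (e1 - e2)"
  proof -
    have "norm (complex_of_real (s * (phi t1 - phi t2)) * e1) = s * \<bar>phi t1 - phi t2\<bar>"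
      using s0 by (simp add: norm_mult e1_def abs_mult of_real_diff[symmetric] del: of_real_diff)
    moreover have "norm (complex_of_real (s * phi t2) * (e1 - e2)) = s * phi t2 * norm (e1 - e2)"
      using s0 phi_nonneg[of t2] by (simp add: norm_mult abs_mult)
    ultimately show ?thesis unfolding eq by (metis norm_triangle_ineq)
  qed
  also have "\<dots> \<le> s * (\<bar>t1 - t2\<bar> / 4) + s * (1/64) * (2 * (\<bar>t1 - t2\<bar> * (41/40) / (4 * s^2)))"
  proof (intro add_mono mult_left_mono mult_mono)
    have "\<bar>phi t1 - phi t2\<bar> = \<bar>t1 - t2\<bar> * \<bar>3/4 - t1 - t2\<bar>"
    proof -
      have "phi t1 - phi t2 = (t1 - t2) * (3/4 - t1 - t2)" unfolding p1 p2 by (simp add: field_simps)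
      then show ?thesis by (simp add: abs_mult)
    qed
    also have "\<dots> \<le> \<bar>t1 - t2\<bar> * (1/4)"
      using t1 t2 by (intro mult_left_mono) (auto simp: abs_if)
    finally show "\<bar>phi t1 - phi t2\<bar> \<le> \<bar>t1 - t2\<bar> / 4" by simp
    have "norm (e1 - e2) \<le> 2 * \<bar>(t1 - x)^2 / (4 * s^2) - (t2 - x)^2 / (4 * s^2)\<bar>"
      unfolding e1_def e2_def by (rule exp_diff)
    also have "\<bar>(t1 - x)^2 / (4 * s^2) - (t2 - x)^2 / (4 * s^2)\<bar> = \<bar>t1 - t2\<bar> * \<bar>t1 + t2 - 2 * x\<bar> / (4 * s^2)"
      using s0 by (simp add: diff_divide_distrib[symmetric] abs_mult[symmetric] power2_eq_square algebra_simps)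
    also have "\<dots> \<le> \<bar>t1 - t2\<bar> * (41/40) / (4 * s^2)"
      using t1 t2 x s0 by (intro divide_right_mono mult_left_mono) auto
    finally show "norm (e1 - e2) \<le> 2 * (\<bar>t1 - t2\<bar> * (41/40) / (4 * s^2))" by simp
  qed (use s0 phi_le phi_nonneg in auto)
  also have "\<dots> = \<bar>t1 - t2\<bar> * (s / 4 + 41 / (5120 * s))"
    using s0 by (simp add: field_simps power2_eq_square)
  also have "\<dots> \<le> \<bar>t1 - t2\<bar> * (1 / s)"
  proof (rule mult_left_mono)
    have "s / 4 + 41 / (5120 * s) = (s * s / 4 + 41/5120) / s" using s0 by (simp add: field_simps)
    also have "\<dots> \<le> 1 / s"
    proof (intro divide_right_mono)
      have "s * s \<le> 1" using s0 s1 by (intro mult_le_one) auto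
      then show "s * s / 4 + 41/5120 \<le> 1" by simp
    qed (use s0 in auto)
    finally show "s / 4 + 41 / (5120 * s) \<le> 1 / s" .
  qed simp
  finally show ?thesis by (simp add: s_def)
qed

lemma hh_quarter: "hh x m (1/4) = 0" and hh_half: "hh x m (1/2) = 0"
  unfolding hh_def phi_def by auto

lemma hh_lip1:
  assumes x: "\<bar>x\<bar> \<le> 1/160" and t2: "t2 \<in> {1/4..1/2}"
  shows "norm (hh x m t1 - hh x m t2) \<le> \<bar>t1 - t2\<bar> / ss m"
proof (cases "t1 \<in> {1/4..1/2}")
  case True then show ?thesis using hh_lip_in[OF x True t2] by simp
next
  case False
  then have o: "hh x m t1 = 0" by (rule hh_out)
  show ?thesis
  proof (cases "t1 < 1/4")
    case True
    have "norm (hh x m (1/4) - hh x m t2) \<le> \<bar>1/4 - t2\<bar> / ss m"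
      by (rule hh_lip_in[OF x _ t2]) auto
    also have "\<dots> \<le> \<bar>t1 - t2\<bar> / ss m" using True t2 ss_pos[of m] by (intro divide_right_mono) auto
    finally show ?thesis using o hh_quarter by simp
  next
    case False
    then have "t1 > 1/2" using \<open>t1 \<notin> _\<close> by auto
    have "norm (hh x m (1/2) - hh x m t2) \<le> \<bar>1/2 - t2\<bar> / ss m"
      by (rule hh_lip_in[OF x _ t2]) auto
    also have "\<dots> \<le> \<bar>t1 - t2\<bar> / ss m" using \<open>t1 > 1/2\<close> t2 ss_pos[of m] by (intro divide_right_mono) auto
    finally show ?thesis using o hh_half by simp
  qed
qed

lemma hh_lip:
  assumes x: "\<bar>x\<bar> \<le> 1/160"
  shows "norm (hh x m t1 - hh x m t2) \<le> \<bar>t1 - t2\<bar> / ss m"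
proof (cases "t2 \<in> {1/4..1/2}")
  case True then show ?thesis by (rule hh_lip1[OF x])
next
  case False
  show ?thesis
  proof (cases "t1 \<in> {1/4..1/2}")
    case True
    then show ?thesis using hh_lip1[OF x True, of m t2] by (simp add: norm_minus_commute abs_minus_commute)
  next
    case False
    then show ?thesis using \<open>t2 \<notin> _\<close> hh_out[of t1] hh_out[of t2] ss_pos[of m] by simp
  qed
qed

lemma ss_inv: "1 / ss m = 100^(m+2)"
  unfolding ss_def by (simp add: power_one_over)

lemma geo_bound: "(\<Sum>m<N. 100^(m+2)::real) \<le> 100^(N+2)/99"
proof (induction N)
  case 0 then show ?case by simp
next
  case (Suc N)
  then show ?case by simp
qed

lemma summable_ss: "summable ss"
  unfolding ss_def by (simp add: summable_mult power_add)

lemma suminf_ss_shift: "(\<Sum>k. ss (k + N)) = ss N * 100 / 99"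
proof -
  have "(\<lambda>k. ss (k + N)) = (\<lambda>k. ss N * (1/100)^k)"
    unfolding ss_def by (simp add: power_add algebra_simps)
  then show ?thesis by (simp add: suminf_mult suminf_geometric)
qed

lemma summable_hh: "summable (\<lambda>m. hh (X m) m t)"
proof (rule summable_comparison_test[OF _ summable_ss])
  have "norm (hh (X n) n t) \<le> ss n" for n using hh_norm_le[of "X n" n t] ss_pos[of n] by linarith
  then show "\<exists>N. \<forall>n\<ge>N. norm (hh (X n) n t) \<le> ss n" by auto
qed

lemma ss_small: "0 < d \<Longrightarrow> \<exists>n. ss n \<le> d"
proof -
  assume "0 < d"
  obtain n where "(1/100::real)^n < d" using real_arch_pow_inv[OF \<open>0<d\<close>, of "1/100"] by auto
  moreover have "ss n \<le> (1/100)^n" unfolding ss_def by (rule power_decreasing) auto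
  ultimately show ?thesis by (intro exI[of _ n]) linarith
qed

lemma holder_f:
  assumes X: "\<And>m. \<bar>X m\<bar> \<le> 1/160"
  shows "norm ((\<Sum>m. hh (X m) m t1) - (\<Sum>m. hh (X m) m t2)) \<le> 4 * sqrt \<bar>t1 - t2\<bar>"
proof (cases "t1 = t2")
  case True then show ?thesis by simp
next
  case False
  define \<Delta> where "\<Delta> = \<bar>t1 - t2\<bar>"
  define d where "d = sqrt \<Delta>"
  have \<Delta>0: "0 < \<Delta>" using False \<Delta>_def by auto
  have d0: "0 < d" using \<Delta>0 d_def by auto
  have dd: "\<Delta> = d * d" using \<Delta>0 d_def by simp
  define D where "D m = hh (X m) m t1 - hh (X m) m t2" for m
  have eqD: "(\<Sum>m. hh (X m) m t1) - (\<Sum>m. hh (X m) m t2) = suminf D"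
    unfolding D_def by (rule suminf_diff) (rule summable_hh)+
  define N where "N = (LEAST n. ss n \<le> d)"
  have ssN: "ss N \<le> d" unfolding N_def using ss_small[OF d0] by (metis LeastI)
  have ltN: "m < N \<Longrightarrow> d < ss m" for m unfolding N_def using not_less_Least by force
  define B where "B m = (if m < N then \<Delta> / ss m else 2 * ss m)" for m
  have DB: "norm (D m) \<le> B m" for m
  proof (cases "m < N")
    case True then show ?thesis unfolding D_def B_def \<Delta>_def using hh_lip[OF X] by simp
  next
    case False
    have "norm (D m) \<le> norm (hh (X m) m t1) + norm (hh (X m) m t2)"
      unfolding D_def by (rule norm_triangle_ineq4)
    also have "\<dots> \<le> 2 * ss m" using hh_norm_le[of "X m" m t1] hh_norm_le[of "X m" m t2] ss_pos[of m] by linarith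
    finally show ?thesis using False B_def by simp
  qed
  have sB: "summable B"
  proof -
    have "summable (\<lambda>m. 2 * ss m)" using summable_ss by (rule summable_mult)
    moreover have "eventually (\<lambda>m. B m = 2 * ss m) sequentially"
      unfolding B_def eventually_sequentially by (intro exI[of _ N]) auto
    ultimately show ?thesis using summable_cong by metis
  qed
  have sD: "summable (\<lambda>m. norm (D m))"
    by (rule summable_comparison_test[OF _ sB]) (use DB in auto)
  have "norm (suminf D) \<le> (\<Sum>m. norm (D m))" by (rule summable_norm[OF sD])
  also have "\<dots> \<le> suminf B" by (rule suminf_le[OF DB sD sB])
  also have "\<dots> = (\<Sum>k. B (k + N)) + (\<Sum>m<N. B m)" by (rule suminf_split_initial_segment[OF sB])
  also have "(\<Sum>k. B (k + N)) = 2 * (ss N * 100 / 99)"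
  proof -
    have "(\<Sum>k. B (k + N)) = (\<Sum>k. 2 * ss (k + N))" unfolding B_def by simp
    also have "\<dots> = 2 * (\<Sum>k. ss (k + N))"
      by (rule suminf_mult) (use summable_ss in \<open>simp add: summable_iff_shift\<close>)
    finally show ?thesis by (simp add: suminf_ss_shift)
  qed
  also have "(\<Sum>m<N. B m) \<le> 100 * d / 99"
  proof (cases N)
    case 0 then show ?thesis using d0 by simp
  next
    case (Suc K)
    have "(\<Sum>m<N. B m) = \<Delta> * (\<Sum>m<N. 100^(m+2))"
    proof -
      have "(\<Sum>m<N. B m) = (\<Sum>m<N. \<Delta> * (1 / ss m))" unfolding B_def by simp
      then show ?thesis by (simp only: ss_inv sum_distrib_left)
    qed
    also have "\<dots> \<le> \<Delta> * (100^(N+2)/99)" using \<Delta>0 geo_bound by (intro mult_left_mono) auto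
    also have "\<dots> = \<Delta> * 100 * (100^(K+2)) / 99" using Suc by simp
    also have "\<dots> \<le> \<Delta> * 100 * (1 / d) / 99"
    proof -
      have "d < ss K" using ltN Suc by auto
      then have "1 / ss K < 1 / d" using d0 by (simp add: frac_less2)
      then show ?thesis using \<Delta>0 ss_inv[of K] by (intro divide_right_mono mult_left_mono) auto
    qed
    also have "\<dots> = 100 * d / 99" using d0 dd by (simp add: field_simps)
    finally show ?thesis .
  qed
  finally have "norm (suminf D) \<le> 2 * (ss N * 100 / 99) + 100 * d / 99" by simp
  also have "\<dots> \<le> 4 * d" using ssN d0 by linarith
  finally show ?thesis using eqD d_def \<Delta>_def by simp
qed

lemma osc:
  fixes Psi Psi' :: "real \<Rightarrow> real" and A lam :: real
  assumes dPsi: "\<And>t. (Psi has_real_derivative Psi' t) (at t)"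
    and dPsi': "\<And>t. (Psi' has_real_derivative A) (at t)"
    and lam0: "lam > 0" and lam: "\<And>t. t \<in> {1/4..1/2} \<Longrightarrow> lam \<le> \<bar>Psi' t\<bar>"
  shows "norm (integral {1/4..1/2} (\<lambda>t. complex_of_real (phi t) * exp (\<i> * complex_of_real (Psi t))))
           \<le> (1/4) * ((1/4) / lam + (1/64) * \<bar>A\<bar> / lam^2)"
proof -
  define I :: "real set" where "I = {1/4..1/2}"
  define p0 where "p0 t = (t - 1/4) * (1/2 - t)" for t :: real
  define E where "E t = exp (\<i> * complex_of_real (Psi t))" for t
  define q where "q t = p0 t / Psi' t" for t
  define q' where "q' t = ((3/4 - 2*t) * Psi' t - p0 t * A) / (Psi' t)^2" for t
  define F where "F t = complex_of_real (p0 t) * E t" for t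
  define R where "R t = \<i> * complex_of_real (q' t) * E t" for t
  define G where "G t = complex_of_real (q t) * (- \<i> * E t)" for t
  have nz: "t \<in> I \<Longrightarrow> Psi' t \<noteq> 0" for t using lam[of t] lam0 I_def by auto
  have dE: "(E has_vector_derivative (complex_of_real (Psi' t) * (\<i> * E t))) (at t)" for t
  proof -
    have 1: "((\<lambda>t. complex_of_real (Psi t)) has_vector_derivative complex_of_real (Psi' t)) (at t)"
      by (rule has_vector_derivative_of_real[OF dPsi])
    have 2: "((\<lambda>z. exp (\<i> * z)) has_field_derivative \<i> * exp (\<i> * complex_of_real (Psi t))) (at (complex_of_real (Psi t)))"
      by (auto intro!: derivative_eq_intros)
    show ?thesis using field_vector_diff_chain_at[OF 1 2] unfolding E_def o_def by simp
  qed
  have dq: "(q has_real_derivative q' t) (at t)" if "t \<in> I" for t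
  proof -
    have "(p0 has_real_derivative (3/4 - 2*t)) (at t)"
      unfolding p0_def by (auto intro!: derivative_eq_intros simp: algebra_simps)
    from DERIV_divide[OF this dPsi' nz[OF that]]
    show ?thesis unfolding q_def q'_def by (simp add: power2_eq_square)
  qed
  have dG: "(G has_vector_derivative (F t - R t)) (at t within I)" if "t \<in> I" for t
  proof -
    have "(G has_vector_derivative (complex_of_real (q t) * (- \<i> * (complex_of_real (Psi' t) * (\<i> * E t)))
        + complex_of_real (q' t) * (- \<i> * E t))) (at t)"
    proof -
      have dE2: "((\<lambda>x. - \<i> * E x) has_vector_derivative (- \<i> * (complex_of_real (Psi' t) * (\<i> * E t)))) (at t)"
        using has_vector_derivative_mult[OF has_vector_derivative_const[of "- \<i>"] dE[of t]] by (simp only: mult_zero_left add_0_right)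
      show ?thesis unfolding G_def
        by (rule has_vector_derivative_mult[OF has_vector_derivative_of_real[OF dq[OF that]] dE2])
    qed
    moreover have "complex_of_real (q t) * (- \<i> * (complex_of_real (Psi' t) * (\<i> * E t)))
        + complex_of_real (q' t) * (- \<i> * E t) = F t - R t"
    proof -
      have "q t * Psi' t = p0 t" unfolding q_def using nz[OF that] by simp
      then have "complex_of_real (q t) * complex_of_real (Psi' t) = complex_of_real (p0 t)"
        by (metis of_real_mult)
      then show ?thesis unfolding F_def R_def
        by (simp add: algebra_simps)
    qed
    ultimately show ?thesis by (auto intro: has_vector_derivative_at_within)
  qed
  have G0: "G (1/4) = 0" "G (1/2) = 0" unfolding G_def q_def p0_def by auto
  have FR: "((\<lambda>t. F t - R t) has_integral 0) I"
    using fundamental_theorem_of_calculus[of "1/4" "1/2" G "\<lambda>t. F t - R t"] dG G0 I_def by simp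
  have contPsi: "continuous_on I Psi"
    using dPsi by (meson DERIV_isCont continuous_at_imp_continuous_on)
  have Fi: "F integrable_on I"
    unfolding I_def
    by (rule integrable_continuous_interval)
       (unfold F_def E_def p0_def, intro continuous_intros, use contPsi I_def in auto)
  have RJ: "(R has_integral integral I F) I"
  proof -
    have "((\<lambda>t. F t - (F t - R t)) has_integral (integral I F - 0)) I"
      by (rule has_integral_diff[OF integrable_integral[OF Fi] FR])
    then show ?thesis by simp
  qed
  have Rb: "norm (R t) \<le> (1/4) / lam + (1/64) * \<bar>A\<bar> / lam^2" if "t \<in> I" for t
  proof -
    have Pl: "lam \<le> \<bar>Psi' t\<bar>" using lam that I_def by auto
    have p0b: "0 \<le> p0 t" "p0 t \<le> 1/64" using phi_le[of t] phi_nonneg[of t] that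
      unfolding I_def p0_def phi_def by auto
    have tb: "\<bar>3/4 - 2*t\<bar> \<le> 1/4" using that I_def by (auto simp: abs_if)
    have "norm (R t) = \<bar>q' t\<bar>" unfolding R_def E_def by (simp add: norm_mult)
    also have "\<dots> = \<bar>(3/4 - 2*t) / Psi' t - p0 t * A / (Psi' t)^2\<bar>"
    proof -
      have "q' t = (3/4 - 2*t) / Psi' t - p0 t * A / (Psi' t)^2"
        unfolding q'_def using nz[OF that] by (simp add: field_simps power2_eq_square)
      then show ?thesis by simp
    qed
    also have "\<dots> \<le> \<bar>3/4 - 2*t\<bar> / \<bar>Psi' t\<bar> + p0 t * \<bar>A\<bar> / (Psi' t)^2"
    proof -
      have "\<bar>(3/4 - 2*t) / Psi' t - p0 t * A / (Psi' t)^2\<bar> \<le> \<bar>(3/4 - 2*t) / Psi' t\<bar> + \<bar>p0 t * A / (Psi' t)^2\<bar>"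
        by (rule abs_triangle_ineq4)
      also have "\<bar>p0 t * A / (Psi' t)^2\<bar> = p0 t * \<bar>A\<bar> / (Psi' t)^2" using p0b by (simp add: abs_mult)
      finally show ?thesis by simp
    qed
    also have "\<dots> \<le> (1/4) / lam + (1/64) * \<bar>A\<bar> / lam^2"
    proof (rule add_mono)
      show "\<bar>3/4 - 2*t\<bar> / \<bar>Psi' t\<bar> \<le> (1/4) / lam"
        using tb Pl lam0 by (intro frac_le) auto
      have "lam^2 \<le> (Psi' t)^2" using Pl lam0 by (metis abs_ge_zero less_imp_le power2_abs power_mono)
      then show "p0 t * \<bar>A\<bar> / (Psi' t)^2 \<le> (1/64) * \<bar>A\<bar> / lam^2"
        using p0b lam0 by (intro frac_le mult_mono) auto
    qed
    finally show ?thesis .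
  qed
  have B0: "0 \<le> (1/4) / lam + (1/64) * \<bar>A\<bar> / lam^2" using lam0 by simp
  have "norm (integral I F) \<le> ((1/4) / lam + (1/64) * \<bar>A\<bar> / lam^2) * Henstock_Kurzweil_Integration.content {1/4..1/2::real}"
    by (rule has_integral_bound_real[OF B0, where S="{}" and f=R]) (use RJ Rb I_def in auto)
  moreover have "Henstock_Kurzweil_Integration.content {1/4..1/2::real} = 1/4" by simp
  moreover have "integral I F = integral {1/4..1/2} (\<lambda>t. complex_of_real (phi t) * exp (\<i> * complex_of_real (Psi t)))"
    unfolding I_def by (rule integral_cong) (simp add: F_def E_def p0_def phi_def)
  ultimately show ?thesis by (simp add: mult.commute)
qed

lemma cont_f:
  assumes X: "\<And>m. \<bar>X m\<bar> \<le> 1/160"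
  shows "continuous_on S (\<lambda>t. \<Sum>m. hh (X m) m t)"
  unfolding continuous_on_iff
proof (intro ballI allI impI)
  fix x e :: real assume "0 < e"
  show "\<exists>d>0. \<forall>x'\<in>S. dist x' x < d \<longrightarrow> dist (\<Sum>m. hh (X m) m x') (\<Sum>m. hh (X m) m x) < e"
  proof (intro exI[of _ "(e/4)^2"] conjI ballI impI)
    show "0 < (e/4)^2" using \<open>0 < e\<close> by simp
    fix x' assume "dist x' x < (e/4)^2"
    then have "\<bar>x' - x\<bar> < (e / 4)\<^sup>2" by (simp add: dist_real_def)
    then have "sqrt \<bar>x' - x\<bar> < e/4" using \<open>0 < e\<close>
      by (metis abs_of_pos real_sqrt_abs real_sqrt_less_mono zero_less_divide_iff zero_less_numeral)
    moreover have "dist (\<Sum>m. hh (X m) m x') (\<Sum>m. hh (X m) m x) \<le> 4 * sqrt \<bar>x' - x\<bar>"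
      unfolding dist_norm by (rule holder_f[OF X])
    ultimately show "dist (\<Sum>m. hh (X m) m x') (\<Sum>m. hh (X m) m x) < e" by linarith
  qed
qed

lemma hh_cont: "continuous_on {1/4..1/2} (hh x m)"
proof -
  have "continuous_on {1/4..1/2} (\<lambda>t. complex_of_real (ss m * ((t - 1/4) * (1/2 - t))) *
      exp (\<i> * complex_of_real ((t - x)^2 / (4 * (ss m)^2))))"
    using ss_pos[of m] by (intro continuous_intros) auto
  then show ?thesis by (rule continuous_on_cong[THEN iffD1, rotated 2]) (auto simp: hh_def phi_def)
qed

lemma int_phi: "((\<lambda>t. complex_of_real (phi t)) has_integral complex_of_real (1/384)) {1/4..1/2}"
proof -
  define P where "P t = complex_of_real ((3/8)*(t*t) - (1/3)*(t*t*t) - (1/8)*t)" for t :: real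
  have "((\<lambda>t. complex_of_real ((t - 1/4) * (1/2 - t))) has_integral (P (1/2) - P (1/4))) {1/4..1/2}"
  proof (rule fundamental_theorem_of_calculus)
    fix t :: real
    have "((\<lambda>t. (3/8)*(t*t) - (1/3)*(t*t*t) - (1/8)*t) has_real_derivative ((t - 1/4) * (1/2 - t))) (at t)"
      by (rule derivative_eq_intros refl)+ (simp add: algebra_simps)
    then show "(P has_vector_derivative complex_of_real ((t - 1/4) * (1/2 - t))) (at t within {1/4..1/2})"
      unfolding P_def by (rule has_vector_derivative_at_within[OF has_vector_derivative_of_real])
  qed simp
  moreover have "P (1/2) - P (1/4) = complex_of_real (1/384)"
  proof -
    have "(3/8)*((1/2)*(1/2)) - (1/3)*((1/2)*(1/2)*(1/2)) - (1/8)*(1/2) - ((3/8)*((1/4)*(1/4)) - (1/3)*((1/4)*(1/4)*(1/4)) - (1/8)*(1/4)) = (1/384::real)"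
      by simp
    then show ?thesis unfolding P_def by (metis of_real_diff)
  qed
  ultimately show ?thesis
    by (subst has_integral_cong[where g="\<lambda>t. complex_of_real ((t - 1/4) * (1/2 - t))"]) (auto simp: phi_def)
qed



lemma ss_mono_lt: "m < n \<Longrightarrow> ss n \<le> ss m / 100"
proof -
  assume "m < n"
  have "(1/100::real)^(n+2) \<le> (1/100)^(m+3)" by (rule power_decreasing) (use \<open>m<n\<close> in auto)
  moreover have "(1/100::real)^(m+3) = (1/100)^(m+2) / 100" by (simp add: power_add power3_eq_cube)
  ultimately show ?thesis unfolding ss_def by linarith
qed

lemma exp_combine: "exp (\<i> * complex_of_real \<alpha>) * exp (- \<i> * complex_of_real \<beta>) = exp (\<i> * complex_of_real (\<alpha> - \<beta>))"
  by (simp add: mult_exp_exp algebra_simps)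

lemma cross:
  assumes X: "\<And>m. \<bar>X m\<bar> \<le> 1/160" and mn: "m < n"
  shows "norm (integral {1/4..1/2} (\<lambda>t. hh (X m) m t * exp (- \<i> * complex_of_real ((X n - t)^2 / (4 * (ss n)^2)))))
          \<le> ss m * (ss n)^2"
proof -
  define a where "a = (ss n)^2"
  define c where "c = (ss m)^2"
  have a0: "0 < a" unfolding a_def using ss_pos[of n] by simp
  have ca: "10000 * a \<le> c"
  proof -
    have "ss n \<le> ss m / 100" by (rule ss_mono_lt[OF mn])
    then have "(ss n)^2 \<le> (ss m / 100)^2" using ss_pos[of n] by (intro power_mono) auto
    then show ?thesis unfolding a_def c_def by (simp add: power_divide)
  qed
  have c0: "0 < c" using a0 ca by linarith
  define u where "u = 1 / (2 * a)"
  define v where "v = 1 / (2 * c)"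
  have u0: "0 < u" unfolding u_def using a0 by simp
  have v0: "0 < v" unfolding v_def using c0 by simp
  have vu: "v \<le> u / 10000"
    unfolding u_def v_def using a0 c0 ca by (simp add: field_simps)
  define Psi where "Psi t = (1/(4*c)) * ((t - X m) * (t - X m)) - (1/(4*a)) * ((t - X n) * (t - X n))" for t
  define Psi' where "Psi' t = v * (t - X m) - u * (t - X n)" for t
  have eq: "hh (X m) m t * exp (- \<i> * complex_of_real ((X n - t)^2 / (4 * (ss n)^2)))
      = complex_of_real (ss m) * (complex_of_real (phi t) * exp (\<i> * complex_of_real (Psi t)))" for t
  proof -
    have "Psi t = (t - X m)^2 / (4 * (ss m)^2) - (X n - t)^2 / (4 * (ss n)^2)"
      unfolding Psi_def a_def c_def using ss_pos[of m] ss_pos[of n]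
      by (simp add: power2_eq_square field_simps)
    note Pe = this
    have "hh (X m) m t * exp (- \<i> * complex_of_real ((X n - t)^2 / (4 * (ss n)^2)))
       = complex_of_real (ss m * phi t) * (exp (\<i> * complex_of_real ((t - X m)^2 / (4 * (ss m)^2))) *
           exp (- \<i> * complex_of_real ((X n - t)^2 / (4 * (ss n)^2))))"
      unfolding hh_def by (simp only: mult.assoc)
    also have "\<dots> = complex_of_real (ss m * phi t) * exp (\<i> * complex_of_real (Psi t))"
      by (simp only: exp_combine Pe[symmetric])
    finally show ?thesis by (simp only: of_real_mult mult.assoc)
  qed
  have dPsi: "(Psi has_real_derivative Psi' t) (at t)" for t
    unfolding Psi_def Psi'_def u_def v_def
    by (rule derivative_eq_intros refl)+ (use a0 c0 in \<open>simp add: field_simps\<close>)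
  have dPsi': "(Psi' has_real_derivative (v - u)) (at t)" for t
    unfolding Psi'_def
    by (rule derivative_eq_intros refl)+ simp
  have lam: "u / 5 \<le> \<bar>Psi' t\<bar>" if "t \<in> {1/4..1/2}" for t
  proof -
    have t1: "1/4 \<le> t" "t \<le> 1/2" using that by auto
    have h1: "u * (6/25) \<le> u * (t - X n)" using u0 t1 X[of n] by (intro mult_left_mono) (auto simp: abs_le_iff)
    have h2: "v * (t - X m) \<le> (u / 10000) * (1/2 + 1/160)"
      using vu v0 t1 X[of m] by (intro mult_mono) (auto simp: abs_le_iff)
    have "Psi' t \<le> - (u / 5)" unfolding Psi'_def using h1 h2 u0 by (simp add: algebra_simps)
    then show ?thesis by linarith
  qed
  have A: "\<bar>v - u\<bar> \<le> u" using vu v0 u0 by linarith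
  have "norm (integral {1/4..1/2} (\<lambda>t. complex_of_real (phi t) * exp (\<i> * complex_of_real (Psi t))))
        \<le> (1/4) * ((1/4) / (u/5) + (1/64) * \<bar>v - u\<bar> / (u/5)^2)"
    by (rule osc[OF dPsi dPsi']) (use u0 lam in auto)
  also have "\<dots> \<le> (1/4) * ((1/4) / (u/5) + (1/64) * u / (u/5)^2)"
    using A u0 by (intro mult_left_mono add_left_mono divide_right_mono mult_left_mono) auto
  also have "\<dots> = (105 / 256) * (1 / u)" using u0 by (simp add: field_simps power2_eq_square)
  also have "\<dots> \<le> a" unfolding u_def using a0 by simp
  finally have I: "norm (integral {1/4..1/2} (\<lambda>t. complex_of_real (phi t) * exp (\<i> * complex_of_real (Psi t)))) \<le> a" .
  have "norm (integral {1/4..1/2} (\<lambda>t. hh (X m) m t * exp (- \<i> * complex_of_real ((X n - t)^2 / (4 * (ss n)^2)))))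
      = ss m * norm (integral {1/4..1/2} (\<lambda>t. complex_of_real (phi t) * exp (\<i> * complex_of_real (Psi t))))"
    unfolding eq using ss_pos[of m] by (simp add: norm_mult)
  also have "\<dots> \<le> ss m * a" using I ss_pos[of m] by (intro mult_left_mono) auto
  finally show ?thesis unfolding a_def .
qed

lemma En_cont: "continuous_on S (\<lambda>t. exp (- \<i> * complex_of_real ((x - t)^2 / (4 * (ss n)^2))))"
  using ss_pos[of n] by (intro continuous_intros) auto

lemma key:
  assumes X: "\<And>m. \<bar>X m\<bar> \<le> 1/160"
  shows "ss n / 500 \<le> norm (integral UNIV (\<lambda>t. (\<Sum>m. hh (X m) m t) *
            exp (- \<i> * complex_of_real ((X n - t)^2 / (4 * (ss n)^2)))))"
proof -
  define I :: "real set" where "I = {1/4..1/2}"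
  define s where "s = ss n"
  have s0: "0 < s" and s1: "s \<le> 1/10000" using ss_pos ss_le s_def by auto
  define En where "En t = exp (- \<i> * complex_of_real ((X n - t)^2 / (4 * (ss n)^2)))" for t
  define f where "f t = (\<Sum>m. hh (X m) m t)" for t
  define K where "K t = f t * En t" for t
  define T where "T t = (\<Sum>k. hh (X (k + Suc n)) (k + Suc n) t)" for t
  define hm where "hm m t = hh (X m) m t * En t" for m t
  have f0: "t \<notin> I \<Longrightarrow> f t = 0" for t unfolding f_def I_def by (simp add: hh_out)
  have UI: "integral UNIV K = integral I K"
  proof -
    have "K = (\<lambda>t. if t \<in> I then K t else 0)" unfolding K_def using f0 by auto
    then show ?thesis by (metis integral_restrict_UNIV)
  qed
  have Ksplit: "K t = T t * En t + ((\<Sum>m<n. hm m t) + hm n t)" for t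
  proof -
    have "f t = T t + (\<Sum>m<Suc n. hh (X m) m t)"
      unfolding f_def T_def by (rule suminf_split_initial_segment[OF summable_hh])
    then show ?thesis unfolding K_def hm_def by (simp add: algebra_simps sum_distrib_left)
  qed
  have hmi: "hm m integrable_on I" for m
    unfolding I_def hm_def En_def
    by (rule integrable_continuous_interval, rule continuous_on_mult[OF hh_cont En_cont])
  have Ki: "K integrable_on I"
    unfolding I_def K_def f_def En_def
    by (rule integrable_continuous_interval, rule continuous_on_mult[OF cont_f[OF X] En_cont])
  have Ti: "(\<lambda>t. T t * En t) integrable_on I"
  proof -
    have "(\<lambda>t. K t - ((\<Sum>m<n. hm m t) + hm n t)) integrable_on I"
      by (intro integrable_diff integrable_add integrable_sum Ki hmi) auto
    moreover have "(\<lambda>t. K t - ((\<Sum>m<n. hm m t) + hm n t)) = (\<lambda>t. T t * En t)"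
      using Ksplit by (auto simp: algebra_simps)
    ultimately show ?thesis by simp
  qed
  have IK: "integral I K = integral I (\<lambda>t. T t * En t) + ((\<Sum>m<n. integral I (hm m)) + integral I (hm n))"
  proof -
    have "integral I K = integral I (\<lambda>t. T t * En t + ((\<Sum>m<n. hm m t) + hm n t))"
      by (rule arg_cong[where f="integral I"], rule ext, rule Ksplit)
    also have "\<dots> = integral I (\<lambda>t. T t * En t) + integral I (\<lambda>t. (\<Sum>m<n. hm m t) + hm n t)"
      by (intro integral_add Ti integrable_add integrable_sum hmi) auto
    also have "integral I (\<lambda>t. (\<Sum>m<n. hm m t) + hm n t) = integral I (\<lambda>t. \<Sum>m<n. hm m t) + integral I (hm n)"
      by (intro integral_add integrable_sum hmi) auto
    also have "integral I (\<lambda>t. \<Sum>m<n. hm m t) = (\<Sum>m<n. integral I (hm m))"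
      by (intro integral_sum hmi) auto
    finally show ?thesis .
  qed
  have self: "integral I (hm n) = complex_of_real (s / 384)"
  proof -
    have "hm n t = complex_of_real s * complex_of_real (phi t)" for t
    proof -
      have "hm n t = complex_of_real (s * phi t) * (exp (\<i> * complex_of_real ((t - X n)^2 / (4 * (ss n)^2))) * En t)"
        unfolding hm_def hh_def s_def by (simp only: mult.assoc)
      also have "exp (\<i> * complex_of_real ((t - X n)^2 / (4 * (ss n)^2))) * En t = 1"
        unfolding En_def exp_combine by (simp add: power2_commute)
      finally show ?thesis by simp
    qed
    then have "hm n = (\<lambda>t. complex_of_real s * complex_of_real (phi t))" by auto
    moreover have "((\<lambda>t. complex_of_real s * complex_of_real (phi t)) has_integral complex_of_real s * complex_of_real (1/384)) I"
      unfolding I_def by (rule has_integral_mult_right[OF int_phi])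
    ultimately show ?thesis using integral_unique by (metis of_real_mult times_divide_eq_right mult_1_right)
  qed
  have crossb: "norm (\<Sum>m<n. integral I (hm m)) \<le> s^2"
  proof -
    have "norm (\<Sum>m<n. integral I (hm m)) \<le> (\<Sum>m<n. norm (integral I (hm m)))" by (rule norm_sum)
    also have "\<dots> \<le> (\<Sum>m<n. ss m * s^2)"
      by (intro sum_mono) (unfold hm_def En_def I_def s_def, rule cross[OF X], auto)
    also have "\<dots> = s^2 * (\<Sum>m<n. ss m)" by (simp add: sum_distrib_right mult.commute)
    also have "(\<Sum>m<n. ss m) \<le> (\<Sum>m. ss m)"
      by (rule sum_le_suminf[OF summable_ss]) (auto intro: less_imp_le ss_pos)
    also have "(\<Sum>m. ss m) = ss 0 * 100 / 99" using suminf_ss_shift[of 0] by simp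
    also have "\<dots> \<le> 1" using ss_le[of 0] by simp
    finally show ?thesis by (simp add: mult_left_mono)
  qed
  have Tb: "norm (integral I (\<lambda>t. T t * En t)) \<le> s / 25344"
  proof -
    have Tn: "norm (T t * En t) \<le> s / 6336" for t
    proof -
      have "norm (T t) \<le> (\<Sum>k. ss (k + Suc n) / 64)"
        unfolding T_def
      proof (rule norm_suminf_le)
        show "norm (hh (X (k + Suc n)) (k + Suc n) t) \<le> ss (k + Suc n) / 64" for k by (rule hh_norm_le)
        show "summable (\<lambda>k. ss (k + Suc n) / 64)"
          by (rule summable_divide[OF summable_ignore_initial_segment[OF summable_ss]])
      qed
      also have "\<dots> = (\<Sum>k. ss (k + Suc n)) / 64"
        by (rule suminf_divide[OF summable_ignore_initial_segment[OF summable_ss]])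
      also have "\<dots> = ss (Suc n) * 100 / 99 / 64" using suminf_ss_shift[of "Suc n"] by simp
      also have "ss (Suc n) = s / 100" unfolding s_def ss_def by simp
      finally have "norm (T t) \<le> s / 6336" by simp
      moreover have "norm (En t) = 1" unfolding En_def by simp
      ultimately show ?thesis by (simp add: norm_mult)
    qed
    have "norm (integral I (\<lambda>t. T t * En t)) \<le> (s / 6336) * Henstock_Kurzweil_Integration.content {1/4..1/2::real}"
      by (rule has_integral_bound_real[where S="{}"]) (use s0 Tn Ti I_def in auto)
    then show ?thesis by simp
  qed
  have "norm (integral I K) \<ge> s / 384 - s / 25344 - s^2"
  proof -
    have e1: "norm (integral I (hm n)) = s / 384" unfolding self norm_of_real using s0 by simp
    have e2: "integral I (hm n) = integral I K - integral I (\<lambda>t. T t * En t) - (\<Sum>m<n. integral I (hm m))"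
      using IK by (simp add: algebra_simps)
    have e3: "norm (integral I K - integral I (\<lambda>t. T t * En t) - (\<Sum>m<n. integral I (hm m)))
        \<le> norm (integral I K) + norm (integral I (\<lambda>t. T t * En t)) + norm (\<Sum>m<n. integral I (hm m))"
      by (meson norm_triangle_ineq4 order_trans add_right_mono)
    from e1 e2 have "norm (integral I K - integral I (\<lambda>t. T t * En t) - (\<Sum>m<n. integral I (hm m))) = s / 384" by simp
    then show ?thesis using e3 Tb crossb by linarith
  qed
  moreover have "s^2 \<le> s / 10000" using s0 s1 by (simp add: power2_eq_square mult_left_mono)
  ultimately have "s / 500 \<le> norm (integral I K)" using s0 by linarith
  then show ?thesis using UI unfolding K_def f_def En_def s_def by simp
qed

lemma ss_tendsto: "(\<lambda>n. (ss n)^2) \<longlonglongrightarrow> 0"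
proof -
  have "(\<lambda>n. (1/100::real)^n) \<longlonglongrightarrow> 0" by (rule LIMSEQ_power_zero) simp
  then have "(\<lambda>n. (1/100::real)^(n+2)) \<longlonglongrightarrow> 0" by (rule LIMSEQ_ignore_initial_segment)
  then have "ss \<longlonglongrightarrow> 0" unfolding ss_def by simp
  then show ?thesis using tendsto_power[of ss 0 sequentially 2] by simp
qed

theorem proposition1:
  fixes M :: real and b :: "real \<Rightarrow> real"
  assumes "M > 0"
    and "\<forall>a\<in>{0..1}. \<bar>b a\<bar> \<le> M"
    and "b 0 = 1"
  shows "\<exists>f u0. holder_half_supp f \<and> u0 \<in> {0<..<1 / (80 * M)} \<and>
           \<not> ((\<lambda>a. Lop b a f u0) \<longlongrightarrow> Lop b 0 f u0) (at_right 0)"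
proof -
  have M1: "1 \<le> M" using assms(2,3) by force
  define u0 where "u0 = 1 / (160 * M)"
  have u00: "0 < u0" unfolding u0_def using M1 by simp
  have u0l: "u0 \<le> 1/160" unfolding u0_def using M1 by (simp add: field_simps)
  define X where "X m = b ((ss m)^2) * u0" for m
  have X: "\<bar>X m\<bar> \<le> 1/160" for m
  proof -
    have "(ss m)^2 \<le> 1" using ss_le[of m] ss_pos[of m] by (simp add: power_le_one)
    then have "\<bar>b ((ss m)^2)\<bar> \<le> M" using assms(2) by simp
    then have "\<bar>X m\<bar> \<le> M * u0" unfolding X_def using u00 by (simp add: abs_mult mult_right_mono)
    also have "\<dots> = 1/160" unfolding u0_def using M1 by simp
    finally show ?thesis .
  qed
  define f where "f t = (\<Sum>m. hh (X m) m t)" for t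
  have hold: "holder_half_supp f"
    unfolding holder_half_supp_def
  proof (intro conjI allI impI exI)
    fix t :: real assume "t \<notin> {1/4..1/2}"
    then show "f t = 0" unfolding f_def by (simp add: hh_out)
  next
    fix t1 t2 :: real
    show "norm (f t1 - f t2) \<le> 4 * sqrt \<bar>t1 - t2\<bar>" unfolding f_def by (rule holder_f[OF X])
  qed
  have u0I: "u0 \<in> {0<..<1 / (80 * M)}" unfolding u0_def using M1 by (simp add: field_simps)
  have L0: "Lop b 0 f u0 = 0"
    unfolding Lop_def using assms(3) u0l by (simp add: f_def hh_out)
  have Lb: "1/2000 \<le> norm (Lop b ((ss n)^2) f u0)" for n
  proof -
    define a where "a = (ss n)^2"
    have a0: "0 < a" unfolding a_def using ss_pos[of n] by simp
    define J where "J = integral UNIV (\<lambda>t. f t * exp (- \<i> * complex_of_real ((b a * u0 - t)^2 / (4 * a))))"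
    have J: "ss n / 500 \<le> norm J"
      unfolding J_def f_def a_def using key[OF X, of n] by (simp add: X_def)
    have "Lop b a f u0 = complex_of_real (1 / sqrt (2 * pi)) * exp (\<i> * complex_of_real (pi / 4))
           / complex_of_real (sqrt (2 * a)) * J"
      unfolding Lop_def J_def using a0 by simp
    then have "norm (Lop b a f u0) = (1 / sqrt (2 * pi)) / sqrt (2 * a) * norm J"
      using a0 by (simp add: norm_mult norm_divide)
    also have "sqrt (2 * a) = sqrt 2 * ss n"
      unfolding a_def using ss_pos[of n] by (simp add: real_sqrt_mult)
    also have "(1 / sqrt (2 * pi)) / (sqrt 2 * ss n) * norm J \<ge> (1 / sqrt (2 * pi)) / (sqrt 2 * ss n) * (ss n / 500)"
      using J ss_pos[of n] by (intro mult_left_mono) auto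
    moreover have "(1 / sqrt (2 * pi)) / (sqrt 2 * ss n) * (ss n / 500) = 1 / (1000 * sqrt pi)"
      using ss_pos[of n] by (simp add: real_sqrt_mult field_simps)
    moreover have "1 / (1000 * sqrt pi) \<ge> 1/2000"
    proof -
      have "sqrt pi \<le> sqrt 4" using pi_less_4 by (intro real_sqrt_le_mono) simp
      then have "sqrt pi \<le> 2" by simp
      then show ?thesis by (simp add: field_simps)
    qed
    ultimately show ?thesis unfolding a_def by linarith
  qed
  have notlim: "\<not> ((\<lambda>a. Lop b a f u0) \<longlongrightarrow> Lop b 0 f u0) (at_right 0)"
  proof
    assume lim: "((\<lambda>a. Lop b a f u0) \<longlongrightarrow> Lop b 0 f u0) (at_right 0)"
    have fl: "filterlim (\<lambda>n. (ss n)^2) (at_right 0) sequentially"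
    proof (rule tendsto_imp_filterlim_at_right[OF ss_tendsto])
      have "\<forall>n. 0 < (ss n)^2" using ss_pos by (metis less_irrefl zero_less_power2)
      then show "\<forall>\<^sub>F n in sequentially. 0 < (ss n)^2" by (rule always_eventually)
    qed
    have "(\<lambda>n. Lop b ((ss n)^2) f u0) \<longlonglongrightarrow> 0"
      using filterlim_compose[OF lim fl] L0 by (simp add: o_def)
    then have "(\<lambda>n. norm (Lop b ((ss n)^2) f u0)) \<longlonglongrightarrow> 0"
      using tendsto_norm by fastforce
    then have "1/2000 \<le> (0::real)"
      by (rule LIMSEQ_le_const) (use Lb in auto)
    then show False by simp
  qed
  show ?thesis using hold u0I notlim by blast
qed


end
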